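(* Let $x\in\mathbb{R}^n$, $a\in\mathbb{R}$, $b\in\mathbb{R}^n$, and let $C\in\mathbb{R}^{n\times n}$ be symmetric and nonsingular, and let $f(y)=a+b^\top(y-x)+\tfrac12 (y-x)^\top C(y-x)$. Let $y^1,\dots,y^p\in\mathbb{R}^n$, set $z^\ell=\nabla^2 f(x)(y^\ell-x)=C(y^\ell-x)$, $\ell=1,\dots,p$, and let $d^{prev}\in\mathbb{R}^n$. Consider the linear conditions on $d\in\mathbb{R}^n$: $$(z^\ell)^\top d=-f(y^\ell)+f(x)+\tfrac12 (y^\ell-x)^\top z^\ell,\qquad \ell=1,\dots,p,$$ and assume this system is feasible and underdetermined in $d$. Let $d^*$ be the optimal solution of $\min_d \tfrac12\|d-d^{prev}\|^2$ subject to these conditions. Then $$\|d^*-(-C^{-1}b)\|^2\le\|d^{prev}-(-C^{-1}b)\|^2.$$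
   Context: $\|\cdot\|$ is the Euclidean norm. *)

theory Defs
  imports "HOL-Analysis.Analysis"
begin

end

theory Submission
  imports Defs
begin

theorem theorem3:
  fixes x b dprev dstar :: "real ^ 'n" and a :: real and C :: "real ^ 'n ^ 'n"
    and y :: "nat \<Rightarrow> real ^ 'n" and p :: nat and f :: "real ^ 'n \<Rightarrow> real"
    and z :: "nat \<Rightarrow> real ^ 'n"
  assumes symC: "transpose C = C"
    and nonsingC: "invertible C"
    and f_def: "\<And>w. f w = a + b \<bullet> (w - x) + (1/2) * ((w - x) \<bullet> (C *v (w - x)))"
    and z_def: "\<And>l. z l = C *v (y l - x)"
    and feasible: "\<exists>d. \<forall>l\<in>{1..p}. z l \<bullet> d = - f (y l) + f x + (1/2) * ((y l - x) \<bullet> z l)"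
    and underdetermined: "p < CARD('n)"
    and dstar_feas: "\<forall>l\<in>{1..p}. z l \<bullet> dstar = - f (y l) + f x + (1/2) * ((y l - x) \<bullet> z l)"
    and dstar_opt: "\<And>d. (\<forall>l\<in>{1..p}. z l \<bullet> d = - f (y l) + f x + (1/2) * ((y l - x) \<bullet> z l))
                \<Longrightarrow> (1/2) * (norm (dstar - dprev))\<^sup>2 \<le> (1/2) * (norm (d - dprev))\<^sup>2"
  shows "(norm (dstar - (- (matrix_inv C *v b))))\<^sup>2 \<le> (norm (dprev - (- (matrix_inv C *v b))))\<^sup>2"
proof -
  define h where "h = - (matrix_inv C *v b)"
  have CI: "C ** matrix_inv C = mat 1"
    using someI_ex[OF nonsingC[unfolded invertible_def]] unfolding matrix_inv_def by blast
  have Ch: "C *v h = - b"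
  proof -
    have neg: "C *v (- w) = - (C *v w)" for w
      by (simp add: matrix_vector_mult_def vec_eq_iff sum_negf)
    have "C *v (matrix_inv C *v b) = b"
      by (simp add: matrix_vector_mul_assoc CI)
    then show ?thesis unfolding h_def neg by simp
  qed
  define R where "R l = - f (y l) + f x + (1/2) * ((y l - x) \<bullet> z l)" for l
  have hfeas: "z l \<bullet> h = R l" for l
  proof -
    have "z l \<bullet> h = (y l - x) \<bullet> (transpose C *v h)"
      unfolding z_def by (simp add: dot_lmul_matrix vector_transpose_matrix inner_commute)
    also have "\<dots> = - ((y l - x) \<bullet> b)" using symC Ch by simp
    finally show ?thesis unfolding R_def f_def z_def by (simp add: inner_commute)
  qed
  define e where "e = dstar - dprev"
  define v where "v = h - dstar"
  have key: "norm e ^ 2 \<le> norm e ^ 2 + 2 * t * (e \<bullet> v) + t^2 * norm v ^ 2" for t :: real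
  proof -
    have "\<forall>l\<in>{1..p}. z l \<bullet> (dstar + t *\<^sub>R v) = R l"
    proof
      fix l assume l: "l \<in> {1..p}"
      have "z l \<bullet> dstar = R l" using dstar_feas l unfolding R_def by blast
      then show "z l \<bullet> (dstar + t *\<^sub>R v) = R l" using hfeas[of l] unfolding v_def
        by (simp add: inner_add_right inner_diff_right)
    qed
    then have "(1/2) * (norm e)\<^sup>2 \<le> (1/2) * (norm (dstar + t *\<^sub>R v - dprev))\<^sup>2"
      using dstar_opt unfolding R_def e_def by blast
    moreover have "dstar + t *\<^sub>R v - dprev = e + t *\<^sub>R v" unfolding e_def by simp
    moreover have "(norm (e + t *\<^sub>R v))\<^sup>2 = norm e ^ 2 + 2 * t * (e \<bullet> v) + t^2 * norm v ^ 2"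
      unfolding power2_norm_eq_inner
      by (simp add: inner_add_left inner_add_right inner_commute algebra_simps power2_eq_square)
    ultimately show ?thesis by simp
  qed
  have ev: "e \<bullet> v \<ge> 0"
  proof (rule ccontr)
    assume neg: "\<not> 0 \<le> e \<bullet> v"
    have vnz: "norm v ^ 2 > 0"
    proof -
      have "v \<noteq> 0" using neg by auto
      then show ?thesis by simp
    qed
    define t where "t = - (e \<bullet> v) / norm v ^ 2"
    have "2 * t * (e \<bullet> v) + t^2 * norm v ^ 2 = - ((e \<bullet> v)^2) / norm v ^ 2"
      unfolding t_def using vnz by (simp add: field_simps power2_eq_square)
    moreover have "((e \<bullet> v)^2) / norm v ^ 2 > 0" using neg vnz by simp
    ultimately show False using key[of t] by linarith
  qed
  have "dprev - h = - (e + v)" unfolding e_def v_def by simp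
  then have "(norm (dprev - h))\<^sup>2 = norm e ^ 2 + 2 * (e \<bullet> v) + norm v ^ 2"
    unfolding power2_norm_eq_inner
    by (simp add: inner_diff_left inner_diff_right inner_commute)
  moreover have "dstar - h = - v" unfolding v_def by simp
  ultimately show ?thesis using ev unfolding h_def[symmetric]
    by (simp add: norm_minus_cancel)
qed

end
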